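(* Suppose $0<1/m\ll\delta\ll\nu\ll\epsilon,1/k,1/s,d_0\le1/2$, where $k\ge2$ and $s\ge1$ are integers. Suppose $d_1,\dots,d_s\ge d_0$ with $\sum_{i\in[s]}d_i=1$. Suppose that $H^{(k-1)}$ is an $(m,k,k-1)$-graph with $|\mathcal K_k(H^{(k-1)})|\ge\epsilon m^k$, that $H_1,\dots,H_s$ are $(m,k,k)$-graphs forming a partition of $\mathcal K_k(H^{(k-1)})$, and that $H_i$ is $(\epsilon+\delta,d_i)$-regular with respect to $H^{(k-1)}$ for each $i\in[s]$. Then there exist $(m,k,k)$-graphs $G_1,\dots,G_s$ such that (G1) $G_1,\dots,G_s$ form a partition of $\mathcal K_k(H^{(k-1)})$; (G2) $G_i$ is $(\epsilon,d_i)$-regular with respect to $H^{(k-1)}$ for each $i\in[s]$; and (G3) $|G_i\triangle H_i|\le\nu m^k$ for each $i\in[s]$.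
   Context: Hierarchy convention: a statement asserted for $0<a_1\ll a_2\ll\dots\ll a_r$ means there are non-decreasing functions such that it holds whenever each parameter is at most the corresponding function of the parameters to its right; integer parameters appear as reciprocals. $x=y\pm z$ means $|x-y|\le z$. Given disjoint sets $V_1,\dots,V_k$ each of size $m$ or $m+1$, a set is crossing if it meets each $V_i$ in at most one element. An $(m,k,j)$-graph on $\{V_1,\dots,V_k\}$ is a $j$-uniform hypergraph all of whose edges are crossing $j$-sets. For a $j$-graph $G$ ($j\ge2$), $\mathcal K_k(G)$ is the set of $k$-sets all of whose $j$-subsets are edges of $G$; if $j=1$, $\mathcal K_k(H^{(1)})$ denotes the crossing $k$-subsets of the vertex set $H^{(1)}$. $H^{(k)}$ is $(\epsilon,d)$-regular w.r.t. $H^{(k-1)}$ if every $Q\subseteq H^{(k-1)}$ with $|\mathcal K_k(Q)|\ge\epsilon|\mathcal K_k(H^{(k-1)})|$ satisfies $|H^{(k)}\cap\mathcal K_k(Q)|=(d\pm\epsilon)|\mathcal K_k(Q)|$. *)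

theory Defs
  imports Complex_Main "HOL-Library.Disjoint_Sets"
begin

definition vertex_classes :: "nat \<Rightarrow> nat \<Rightarrow> (nat \<Rightarrow> 'a set) \<Rightarrow> bool" where
  "vertex_classes m k V \<longleftrightarrow>
     disjoint_family_on V {1..k} \<and> (\<forall>i\<in>{1..k}. card (V i) = m \<or> card (V i) = Suc m)"

definition crossing :: "nat \<Rightarrow> (nat \<Rightarrow> 'a set) \<Rightarrow> 'a set \<Rightarrow> bool" where
  "crossing k V A \<longleftrightarrow> A \<subseteq> (\<Union>i\<in>{1..k}. V i) \<and> (\<forall>i\<in>{1..k}. card (A \<inter> V i) \<le> 1)"

text \<open>A j-graph on the classes (an (m,k,j)-graph once vertex_classes m k V holds): all edges are crossing j-sets.\<close>
definition kj_graph :: "nat \<Rightarrow> (nat \<Rightarrow> 'a set) \<Rightarrow> nat \<Rightarrow> 'a set set \<Rightarrow> bool" where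
  "kj_graph k V j G \<longleftrightarrow> (\<forall>A\<in>G. crossing k V A \<and> card A = j)"

text \<open>K_k(G) for a j-graph G: crossing k-sets all of whose j-subsets are edges of G.
  (For j \<ge> 2 the crossing condition is automatic; for j = 1 this is the set of crossing
  k-subsets of the vertex set of G.)\<close>
definition cliques :: "nat \<Rightarrow> (nat \<Rightarrow> 'a set) \<Rightarrow> nat \<Rightarrow> 'a set set \<Rightarrow> 'a set set" where
  "cliques k V j G = {A. crossing k V A \<and> card A = k \<and> (\<forall>B. B \<subseteq> A \<and> card B = j \<longrightarrow> B \<in> G)}"

definition regular_wrt :: "nat \<Rightarrow> (nat \<Rightarrow> 'a set) \<Rightarrow> real \<Rightarrow> real \<Rightarrow> 'a set set \<Rightarrow> 'a set set \<Rightarrow> bool" where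
  "regular_wrt k V eps d Hk Hk1 \<longleftrightarrow>
     (\<forall>Q. Q \<subseteq> Hk1 \<and> real (card (cliques k V (k-1) Q)) \<ge> eps * real (card (cliques k V (k-1) Hk1))
        \<longrightarrow> \<bar>real (card (Hk \<inter> cliques k V (k-1) Q)) - d * real (card (cliques k V (k-1) Q))\<bar>
              \<le> eps * real (card (cliques k V (k-1) Q)))"

definition partitions :: "nat \<Rightarrow> (nat \<Rightarrow> 'b set) \<Rightarrow> 'b set \<Rightarrow> bool" where
  "partitions s H X \<longleftrightarrow> disjoint_family_on H {1..s} \<and> (\<Union>i\<in>{1..s}. H i) = X"

definition hier_fun :: "nat \<Rightarrow> (real list \<Rightarrow> real) \<Rightarrow> bool" where
  "hier_fun n f \<longleftrightarrow>
     (\<forall>xs. length xs = n \<and> (\<forall>x\<in>set xs. 0 < x) \<longrightarrow> 0 < f xs) \<and>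
     (\<forall>xs ys. length xs = n \<and> (\<forall>x\<in>set xs. 0 < x) \<and> list_all2 (\<le>) xs ys \<longrightarrow> f xs \<le> f ys)"

end

theory Submission
  imports Defs "HOL-Probability.Hoeffding"
begin



lemma hoeff_Pi:
  fixes C :: "'a set" and S :: "'a set" and q :: "'b pmf" and Y :: "'a \<Rightarrow> 'b \<Rightarrow> real"
  assumes fin: "finite C" and SC: "S \<subseteq> C" and ne: "S \<noteq> {}"
    and bnd: "\<And>K x. K \<in> S \<Longrightarrow> Y K x \<in> {0..1}" and e: "e \<ge> 0"
  shows "measure_pmf.prob (Pi_pmf C dflt (\<lambda>_. q))
           {\<omega>. e \<le> \<bar>(\<Sum>K\<in>S. Y K (\<omega> K)) - (\<Sum>K\<in>S. measure_pmf.expectation q (Y K))\<bar>}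
         \<le> 2 * exp (-2 * e\<^sup>2 / real (card S))"
proof -
  let ?M = "measure_pmf (Pi_pmf C dflt (\<lambda>_. q))"
  have finS: "finite S" using fin SC finite_subset by blast
  interpret H: Hoeffding_ineq ?M S "\<lambda>K \<omega>. Y K (\<omega> K)" "\<lambda>_. 0" "\<lambda>_. 1"
     "\<Sum>K\<in>S. measure_pmf.expectation (Pi_pmf C dflt (\<lambda>_. q)) (\<lambda>\<omega>. Y K (\<omega> K))"
  proof unfold_locales
    show "finite S" by fact
    show "prob_space.indep_vars ?M (\<lambda>_. borel) (\<lambda>K \<omega>. Y K (\<omega> K)) S"
      by (intro prob_space.indep_vars_compose2[OF _ prob_space.indep_vars_subset[OF _ indep_vars_Pi_pmf[OF fin] SC]])
         (auto simp: measure_pmf.prob_space_axioms)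
    show "AE x in ?M. Y i (x i) \<in> {0..1}" if "i \<in> S" for i
      using bnd[OF that] by simp
  qed simp
  have ex: "measure_pmf.expectation (Pi_pmf C dflt (\<lambda>_. q)) (\<lambda>\<omega>. Y K (\<omega> K)) = measure_pmf.expectation q (Y K)" if "K \<in> S" for K
  proof -
    have "measure_pmf.expectation (Pi_pmf C dflt (\<lambda>_. q)) (\<lambda>\<omega>. Y K (\<omega> K)) = measure_pmf.expectation (map_pmf (\<lambda>\<omega>. \<omega> K) (Pi_pmf C dflt (\<lambda>_. q))) (Y K)"
      by simp
    also have "map_pmf (\<lambda>\<omega>. \<omega> K) (Pi_pmf C dflt (\<lambda>_. q)) = q"
      using that SC fin by (subst Pi_pmf_component) auto
    finally show ?thesis .
  qed
  have "(\<Sum>i\<in>S. (1 - 0 :: real)\<^sup>2) = real (card S)" by simp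
  moreover have "real (card S) > 0" using finS ne by (simp add: card_gt_0_iff)
  ultimately have "measure_pmf.prob (Pi_pmf C dflt (\<lambda>_. q))
     {x \<in> space ?M. e \<le> \<bar>(\<Sum>K\<in>S. Y K (x K)) - (\<Sum>K\<in>S. measure_pmf.expectation (Pi_pmf C dflt (\<lambda>_. q)) (\<lambda>\<omega>. Y K (\<omega> K)))\<bar>}
     \<le> 2 * exp (-2 * e\<^sup>2 / real (card S))"
    using H.Hoeffding_ineq_abs_ge[OF e] by simp
  moreover have "(\<Sum>K\<in>S. measure_pmf.expectation (Pi_pmf C dflt (\<lambda>_. q)) (\<lambda>\<omega>. Y K (\<omega> K))) = (\<Sum>K\<in>S. measure_pmf.expectation q (Y K))"
    using ex by simp
  ultimately show ?thesis by simp
qed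



lemma label_pmf_exists:
  fixes d :: "nat \<Rightarrow> real"
  assumes s: "1 \<le> s" and g: "0 \<le> \<gamma>" "\<gamma> \<le> 1"
    and dnn: "\<And>i. i \<in> {1..s} \<Longrightarrow> 0 \<le> d i" and dsum: "(\<Sum>i=1..s. d i) = 1"
  shows "\<exists>q::nat pmf. pmf q 0 = 1 - \<gamma> \<and> (\<forall>i\<in>{1..s}. pmf q i = \<gamma> * d i) \<and> set_pmf q \<subseteq> {0..s}"
proof -
  define f where "f x = (if x = 0 then 1 - \<gamma> else if x \<in> {1..s} then \<gamma> * d x else 0)" for x
  have nn: "0 \<le> f x" for x using g dnn by (auto simp: f_def)
  have "(\<integral>\<^sup>+x. ennreal (f x) \<partial>count_space UNIV) = (\<Sum>x\<in>{0..s}. ennreal (f x))"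
    by (rule nn_integral_count_space') (auto simp: f_def)
  also have "\<dots> = ennreal (\<Sum>x\<in>{0..s}. f x)"
    using nn by (simp add: sum_ennreal)
  also have "(\<Sum>x\<in>{0..s}. f x) = f 0 + (\<Sum>x\<in>{1..s}. f x)"
    by (simp add: sum.atLeast_Suc_atMost)
  also have "(\<Sum>x\<in>{1..s}. f x) = (\<Sum>x\<in>{1..s}. \<gamma> * d x)"
    by (rule sum.cong) (auto simp: f_def)
  also have "\<dots> = \<gamma>" using dsum by (simp add: sum_distrib_left[symmetric])
  finally have one: "(\<integral>\<^sup>+x. ennreal (f x) \<partial>count_space UNIV) = 1" by (simp add: f_def)
  define q where "q = embed_pmf f"
  have pq: "pmf q x = f x" for x unfolding q_def by (rule pmf_embed_pmf[OF nn one])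
  have "set_pmf q \<subseteq> {0..s}"
  proof
    fix x assume "x \<in> set_pmf q"
    then have "pmf q x \<noteq> 0" by (simp add: set_pmf_eq)
    then show "x \<in> {0..s}" by (auto simp: pq f_def split: if_splits)
  qed
  then show ?thesis using pq by (intro exI[of _ q]) (auto simp: f_def)
qed

lemma exp_label:
  fixes q :: "nat pmf"
  assumes q0: "pmf q 0 = 1 - \<gamma>" and qi: "pmf q i = \<gamma> * di" and i: "i \<noteq> 0" and a: "a \<noteq> 0"
  shows "measure_pmf.expectation q (\<lambda>x. if (if x = 0 then a else x) = i then 1 else 0 :: real)
           = (if a = i then 1 - \<gamma> else 0) + \<gamma> * di"
proof -
  have "(\<lambda>x. if (if x = 0 then a else x) = i then 1 else 0 :: real) = indicator (if a = i then {0, i} else {i})"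
    using i a by (auto simp: indicator_def fun_eq_iff)
  then have "measure_pmf.expectation q (\<lambda>x. if (if x = 0 then a else x) = i then 1 else 0 :: real)
      = measure_pmf.prob q (if a = i then {0, i} else {i})" by simp
  also have "\<dots> = (if a = i then 1 - \<gamma> else 0) + \<gamma> * di"
    using i q0 qi by (auto simp: measure_measure_pmf_finite)
  finally show ?thesis .
qed

lemma exp_change:
  fixes q :: "nat pmf"
  assumes q0: "pmf q 0 = 1 - \<gamma>"
  shows "measure_pmf.expectation q (\<lambda>x. if x \<noteq> 0 then 1 else 0 :: real) = \<gamma>"
proof -
  have eq: "(\<lambda>x. if x \<noteq> 0 then 1 else 0 :: real) = indicator (UNIV - {0})"
    by (auto simp: indicator_def fun_eq_iff)
  have "measure_pmf.expectation q (\<lambda>x. if x \<noteq> 0 then 1 else 0 :: real) = measure_pmf.expectation q (indicator (UNIV - {0}))"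
    by (simp only: eq)
  also have "\<dots> = measure_pmf.prob q (UNIV - {0})"
    by simp
  also have "\<dots> = 1 - measure_pmf.prob q {0}"
    using measure_pmf.prob_compl[of "{0}" q] by simp
  also have "\<dots> = \<gamma>" using q0 by (simp add: measure_pmf_single)
  finally show ?thesis .
qed



lemma cliques_mono: "Q \<subseteq> Q' \<Longrightarrow> cliques k V j Q \<subseteq> cliques k V j Q'"
  unfolding cliques_def by blast

lemma cliques_sub: "cliques k V j Q \<subseteq> {A. A \<subseteq> (\<Union>i\<in>{1..k}. V i) \<and> card A = k}"
  unfolding cliques_def crossing_def by blast

lemma vc_finite: "vertex_classes m k V \<Longrightarrow> 0 < m \<Longrightarrow> finite (\<Union>i\<in>{1..k}. V i)"
proof -
  assume vc: "vertex_classes m k V" and m: "0 < m"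
  have "finite (V i)" if "i \<in> {1..k}" for i
  proof -
    have "card (V i) = m \<or> card (V i) = Suc m" using vc that by (simp add: vertex_classes_def)
    then have "card (V i) > 0" using m by auto
    then show ?thesis by (rule card_ge_0_finite)
  qed
  then show ?thesis by simp
qed

lemma vc_card: "vertex_classes m k V \<Longrightarrow> card (\<Union>i\<in>{1..k}. V i) \<le> k * (m + 1)"
proof -
  assume vc: "vertex_classes m k V"
  have "card (\<Union>i\<in>{1..k}. V i) \<le> (\<Sum>i\<in>{1..k}. card (V i))" by (rule card_UN_le) simp
  also have "\<dots> \<le> (\<Sum>i\<in>{1..k}. m + 1)"
  proof (rule sum_mono)
    fix i assume "i \<in> {1..k}"
    then have "card (V i) = m \<or> card (V i) = Suc m" using vc by (simp add: vertex_classes_def)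
    then show "card (V i) \<le> m + 1" by auto
  qed
  finally show ?thesis by simp
qed

lemma card_ksets_le:
  assumes "finite U" "F \<subseteq> {A. A \<subseteq> U \<and> card A = j}"
  shows "finite F" "card F \<le> card U ^ j"
proof -
  have fin: "finite {A. A \<subseteq> U \<and> card A = j}" using assms(1) by simp
  show "finite F" using finite_subset[OF assms(2) fin] .
  have "card F \<le> card {A. A \<subseteq> U \<and> card A = j}" by (rule card_mono[OF fin assms(2)])
  also have "\<dots> = card U choose j" using n_subsets[OF assms(1)] by simp
  also have "\<dots> \<le> card U ^ j"
  proof (cases "j \<le> card U")
    case True then show ?thesis by (rule binomial_le_pow)
  next
    case False then show ?thesis by (simp add: binomial_eq_0)
  qed
  finally show "card F \<le> card U ^ j" .
qed

lemma kj_sub: "kj_graph k V j H \<Longrightarrow> H \<subseteq> {A. A \<subseteq> (\<Union>i\<in>{1..k}. V i) \<and> card A = j}"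
  unfolding kj_graph_def crossing_def by blast

lemma cliques_increment:
  assumes U: "finite (\<Union>i\<in>{1..k}. V i)" and e: "card e = k - 1" and k: "1 \<le> k"
  shows "card (cliques k V (k-1) (insert e X)) \<le> card (cliques k V (k-1) X) + card (\<Union>i\<in>{1..k}. V i)"
proof -
  let ?U = "\<Union>i\<in>{1..k}. V i"
  have fin: "finite (cliques k V (k-1) (insert e X))"
    using card_ksets_le(1)[OF U cliques_sub] .
  have sub: "cliques k V (k-1) (insert e X) - cliques k V (k-1) X \<subseteq> (\<lambda>v. insert v e) ` ?U"
  proof
    fix A assume A: "A \<in> cliques k V (k-1) (insert e X) - cliques k V (k-1) X"
    then have AU: "A \<subseteq> ?U" and cA: "card A = k" and all: "\<forall>B. B \<subseteq> A \<and> card B = k - 1 \<longrightarrow> B \<in> insert e X"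
      unfolding cliques_def crossing_def by auto
    from A have "crossing k V A" "card A = k" unfolding cliques_def by auto
    with A obtain B where B: "B \<subseteq> A" "card B = k - 1" "B \<notin> X" unfolding cliques_def by auto
    with all have "B = e" by auto
    with B have eA: "e \<subseteq> A" by simp
    have finA: "finite A" using cA k by (intro card_ge_0_finite) auto
    have "card (A - e) = 1" using card_Diff_subset[OF finite_subset[OF eA finA] eA] cA e k by simp
    then obtain v where v: "A - e = {v}" by (auto simp: card_Suc_eq)
    then have "A = insert v e" using eA by auto
    moreover have "v \<in> ?U" using v AU by auto
    ultimately show "A \<in> (\<lambda>v. insert v e) ` ?U" by blast
  qed
  have "card (cliques k V (k-1) (insert e X)) \<le> card (cliques k V (k-1) (insert e X) \<inter> cliques k V (k-1) X)
        + card (cliques k V (k-1) (insert e X) - cliques k V (k-1) X)"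
    using fin by (metis card_Int_Diff le_refl)
  also have "\<dots> \<le> card (cliques k V (k-1) X) + card ((\<lambda>v. insert v e) ` ?U)"
  proof (intro add_mono card_mono)
    show "finite (cliques k V (k-1) X)" using card_ksets_le(1)[OF U cliques_sub] .
    show "finite ((\<lambda>v. insert v e) ` ?U)" using U by simp
  qed (use sub in auto)
  also have "\<dots> \<le> card (cliques k V (k-1) X) + card ?U"
    using card_image_le[OF U] by simp
  finally show ?thesis .
qed

lemma ivt_sets:
  fixes g :: "'a set \<Rightarrow> nat" and T c :: real
  assumes "finite E" and c0: "0 \<le> c" and inc: "\<And>x Y. x \<in> E \<Longrightarrow> real (g (insert x Y)) \<le> real (g Y) + c"
    and lo: "real (g Q) \<le> T" and hi: "T \<le> real (g (Q \<union> E))"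
  shows "\<exists>X\<subseteq>E. T \<le> real (g (Q \<union> X)) \<and> real (g (Q \<union> X)) \<le> T + c"
  using assms(1) inc hi
proof (induction E rule: finite_induct)
  case empty
  then have "T = real (g Q)" using lo by simp
  then show ?case using c0 by auto
next
  case (insert x F)
  show ?case
  proof (cases "T \<le> real (g (Q \<union> F))")
    case True
    from insert.IH[OF _ True] insert.prems(1) obtain X where "X \<subseteq> F" "T \<le> real (g (Q \<union> X))" "real (g (Q \<union> X)) \<le> T + c"
      by blast
    then show ?thesis by blast
  next
    case False
    have "real (g (Q \<union> insert x F)) = real (g (insert x (Q \<union> F)))" by simp
    also have "\<dots> \<le> real (g (Q \<union> F)) + c" using insert.prems(1) by blast
    finally have "real (g (Q \<union> insert x F)) \<le> T + c" using False by simp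
    then show ?thesis using insert.prems(2) by blast
  qed
qed



lemma exp_neg_inv_sq_mono:
  fixes x y c :: real
  assumes "0 < x" "x \<le> y" "0 \<le> c"
  shows "exp (- c / x\<^sup>2) \<le> exp (- c / y\<^sup>2)"
proof -
  have "x\<^sup>2 \<le> y\<^sup>2" using assms by (intro power_mono) auto
  then have "c / y\<^sup>2 \<le> c / x\<^sup>2" using assms by (intro divide_left_mono) auto
  then show ?thesis by simp
qed

definition fdel :: "real list \<Rightarrow> real" where
  "fdel xs = xs!4 * xs!0 * (xs!1)\<^sup>2 * exp (- 2 / (xs!2)\<^sup>2) / 20"

definition fmm :: "real list \<Rightarrow> real" where
  "fmm xs = xs!0 * (xs!1)\<^sup>2 * (xs!2)^4 * xs!3 * xs!4 * exp (- 6 / (xs!3)\<^sup>2) / 200"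

lemma hier_const: "hier_fun n (\<lambda>_. 1)"
  unfolding hier_fun_def by simp

lemma pos_nth: "\<forall>x\<in>set xs. 0 < (x::real) \<Longrightarrow> i < length xs \<Longrightarrow> 0 < xs ! i"
  by (simp add: nth_mem)

lemma le_nth: "list_all2 (\<le>) xs ys \<Longrightarrow> i < length xs \<Longrightarrow> (xs ! i :: real) \<le> ys ! i"
  by (simp add: list_all2_nthD)

lemma hier_fdel: "hier_fun 5 fdel"
  unfolding hier_fun_def
proof (intro conjI allI impI)
  fix xs :: "real list" assume a: "length xs = 5 \<and> (\<forall>x\<in>set xs. 0 < x)"
  then have "0 < xs!i" if "i < 5" for i using pos_nth that by auto
  from this[of 0] this[of 1] this[of 2] this[of 4] show "0 < fdel xs" unfolding fdel_def by simp
next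
  fix xs ys :: "real list" assume a: "length xs = 5 \<and> (\<forall>x\<in>set xs. 0 < x) \<and> list_all2 (\<le>) xs ys"
  then have p: "0 < xs!i" if "i < 5" for i using pos_nth that by auto
  have l: "xs!i \<le> ys!i" if "i < 5" for i using le_nth a that by auto
  have e: "exp (- 2 / (xs!2)\<^sup>2) \<le> exp (- 2 / (ys!2)\<^sup>2)"
    using p[of 2] l[of 2] by (intro exp_neg_inv_sq_mono) auto
  have s: "(xs!1)\<^sup>2 \<le> (ys!1)\<^sup>2" using p[of 1] l[of 1] by (intro power_mono) auto
  have "xs!4 * xs!0 * (xs!1)\<^sup>2 * exp (- 2 / (xs!2)\<^sup>2) \<le> ys!4 * ys!0 * (ys!1)\<^sup>2 * exp (- 2 / (ys!2)\<^sup>2)"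
    using p[of 0] p[of 1] p[of 4] l[of 0] l[of 4] s e
    by (intro mult_mono) (auto intro!: mult_nonneg_nonneg)
  then show "fdel xs \<le> fdel ys" unfolding fdel_def by (simp add: divide_right_mono)
qed

lemma hier_fmm: "hier_fun 6 fmm"
  unfolding hier_fun_def
proof (intro conjI allI impI)
  fix xs :: "real list" assume a: "length xs = 6 \<and> (\<forall>x\<in>set xs. 0 < x)"
  then have "0 < xs!i" if "i < 6" for i using pos_nth that by auto
  from this[of 0] this[of 1] this[of 2] this[of 3] this[of 4] show "0 < fmm xs" unfolding fmm_def by simp
next
  fix xs ys :: "real list" assume a: "length xs = 6 \<and> (\<forall>x\<in>set xs. 0 < x) \<and> list_all2 (\<le>) xs ys"
  then have p: "0 < xs!i" if "i < 6" for i using pos_nth that by auto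
  have l: "xs!i \<le> ys!i" if "i < 6" for i using le_nth a that by auto
  have e: "exp (- 6 / (xs!3)\<^sup>2) \<le> exp (- 6 / (ys!3)\<^sup>2)"
    using p[of 3] l[of 3] by (intro exp_neg_inv_sq_mono) auto
  have s: "(xs!1)\<^sup>2 \<le> (ys!1)\<^sup>2" using p[of 1] l[of 1] by (intro power_mono) auto
  have s4: "(xs!2)^4 \<le> (ys!2)^4" using p[of 2] l[of 2] by (intro power_mono) auto
  have "xs!0 * (xs!1)\<^sup>2 * (xs!2)^4 * xs!3 * xs!4 * exp (- 6 / (xs!3)\<^sup>2) \<le> ys!0 * (ys!1)\<^sup>2 * (ys!2)^4 * ys!3 * ys!4 * exp (- 6 / (ys!3)\<^sup>2)"
    using p[of 0] p[of 1] p[of 2] p[of 3] p[of 4] l[of 0] l[of 3] l[of 4] s s4 e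
    by (intro mult_mono) (auto intro!: mult_nonneg_nonneg)
  then show "fmm xs \<le> fmm ys" unfolding fmm_def by (simp add: divide_right_mono)
qed

lemma kappa_bound:
  fixes k :: nat
  shows "real ((2*k)^k) \<le> exp (2 * real k ^ 2)"
proof -
  have "real (2*k) \<le> exp (2 * real k)" using exp_ge_add_one_self[of "2 * real k"] by linarith
  then have "real (2*k) ^ k \<le> exp (2 * real k) ^ k" by (intro power_mono) auto
  also have "exp (2 * real k) ^ k = exp (2 * real k ^ 2)"
    by (simp add: exp_of_nat_mult[symmetric] power2_eq_square algebra_simps)
  finally show ?thesis by simp
qed



lemma hs_error:
  fixes \<epsilon> \<delta> di :: real
  assumes k: "2 \<le> k" and fin: "finite (\<Union>i\<in>{1..k}. V i)" and kjH: "kj_graph k V (k-1) H"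
    and reg: "regular_wrt k V (\<epsilon>+\<delta>) di Hi H"
    and e: "0 < \<epsilon>" "\<epsilon> \<le> 1" "0 < \<delta>" "\<epsilon> + \<delta> \<le> 1" and di: "0 \<le> di" "di \<le> 1"
    and n0: "real (card (\<Union>i\<in>{1..k}. V i)) \<le> \<delta> * real (card (cliques k V (k-1) H))"
    and Q: "Q \<subseteq> H" "\<epsilon> * real (card (cliques k V (k-1) H)) \<le> real (card (cliques k V (k-1) Q))"
  shows "\<bar>real (card (Hi \<inter> cliques k V (k-1) Q)) - di * real (card (cliques k V (k-1) Q))\<bar>
          \<le> (\<epsilon> + 5 * \<delta> / \<epsilon>) * real (card (cliques k V (k-1) Q))"
proof -
  let ?U = "\<Union>i\<in>{1..k}. V i"
  let ?cl = "\<lambda>X. cliques k V (k-1) X"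
  let ?g = "\<lambda>X. card (?cl X)"
  define N where "N = real (card (?cl H))"
  define n where "n = real (card ?U)"
  define T where "T = (\<epsilon> + \<delta>) * N"
  have finH: "finite H" using card_ksets_le(1)[OF fin kj_sub[OF kjH]] .
  have fincl: "finite (?cl X)" for X using card_ksets_le(1)[OF fin cliques_sub] .
  obtain Q' where Q': "Q \<subseteq> Q'" "Q' \<subseteq> H" "T \<le> real (?g Q')" "real (?g Q') \<le> max (real (?g Q)) (T + n)"
  proof (cases "T \<le> real (?g Q)")
    case True then show ?thesis using that[of Q] Q by auto
  next
    case False
    have "\<exists>X\<subseteq>H - Q. T \<le> real (?g (Q \<union> X)) \<and> real (?g (Q \<union> X)) \<le> T + n"
    proof (rule ivt_sets)
      show "finite (H - Q)" using finH by simp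
      show "0 \<le> n" by (simp add: n_def)
      show "real (?g (insert x Y)) \<le> real (?g Y) + n" if "x \<in> H - Q" for x Y
      proof -
        have "card x = k - 1" using that kjH by (auto simp: kj_graph_def)
        from cliques_increment[OF fin this, of Y] k show ?thesis by (simp add: n_def)
      qed
      show "real (?g Q) \<le> T" using False by simp
      have "Q \<union> (H - Q) = H" using Q by auto
      then show "T \<le> real (?g (Q \<union> (H - Q)))" using e mult_right_mono[of "\<epsilon>+\<delta>" 1 "real (?g H)"] by (simp add: T_def N_def)
    qed
    then obtain X where "X \<subseteq> H - Q" "T \<le> real (?g (Q \<union> X))" "real (?g (Q \<union> X)) \<le> T + n" by blast
    then have "Q \<subseteq> Q \<union> X" "Q \<union> X \<subseteq> H" "T \<le> real (?g (Q \<union> X))" "real (?g (Q \<union> X)) \<le> max (real (?g Q)) (T + n)"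
      using Q by auto
    then show ?thesis by (rule that)
  qed
  define S where "S = ?cl Q"
  define S' where "S' = ?cl Q'"
  have SS': "S \<subseteq> S'" unfolding S_def S'_def by (rule cliques_mono[OF Q'(1)])
  have finS': "finite S'" unfolding S'_def by (rule fincl)
  have big: "(\<epsilon>+\<delta>) * real (card (?cl H)) \<le> real (card (?cl Q'))" using Q'(3) by (simp add: T_def N_def)
  have regQ': "\<bar>real (card (Hi \<inter> S')) - di * real (card S')\<bar> \<le> (\<epsilon>+\<delta>) * real (card S')"
    using reg Q'(2) big unfolding regular_wrt_def S'_def by blast
  define D where "D = real (card (S' - S))"
  define a where "a = real (card (Hi \<inter> (S' - S)))"
  have cS': "real (card S') = real (card S) + D"
    using card_Diff_subset[OF finite_subset[OF SS' finS'] SS'] card_mono[OF finS' SS'] by (simp add: D_def)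
  have "Hi \<inter> S' = (Hi \<inter> S) \<union> (Hi \<inter> (S' - S))" using SS' by auto
  moreover have "card ((Hi \<inter> S) \<union> (Hi \<inter> (S' - S))) = card (Hi \<inter> S) + card (Hi \<inter> (S' - S))"
    using finS' finite_subset[OF SS' finS'] by (intro card_Un_disjoint) auto
  ultimately have cH: "real (card (Hi \<inter> S')) = real (card (Hi \<inter> S)) + a"
    unfolding a_def by simp
  have a0: "0 \<le> a" and aD: "a \<le> D" unfolding a_def D_def using finS' by (auto intro: card_mono)
  have D0: "0 \<le> D" by (simp add: D_def)
  have SQ: "\<epsilon> * N \<le> real (card S)" using Q by (simp add: S_def N_def)
  have Dle: "D \<le> \<delta> * N + n"
  proof (cases "real (?g Q') \<le> real (?g Q)")
    case True then show ?thesis using cS' D0 e n0 by (simp add: S_def S'_def N_def n_def)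
  next
    case False
    then have "real (card S') \<le> T + n" using Q'(4) by (simp add: S'_def)
    then show ?thesis using cS' SQ by (simp add: T_def algebra_simps)
  qed
  have nN: "n \<le> \<delta> * N" using n0 by (simp add: n_def N_def)
  have DS: "D \<le> 2 * \<delta> / \<epsilon> * real (card S)"
  proof -
    have "D \<le> 2 * \<delta> * N" using Dle nN by simp
    also have "\<delta> * N \<le> \<delta> / \<epsilon> * real (card S)"
    proof -
      have "N \<le> real (card S) / \<epsilon>" using SQ e by (simp add: field_simps)
      then have "\<delta> * N \<le> \<delta> * (real (card S) / \<epsilon>)" using e by (intro mult_left_mono) auto
      then show ?thesis by simp
    qed
    then have "2 * \<delta> * N \<le> 2 * \<delta> / \<epsilon> * real (card S)" by simp
    finally show ?thesis .
  qed
  have err: "\<bar>real (card (Hi \<inter> S)) - di * real (card S)\<bar> \<le> (\<epsilon>+\<delta>) * real (card S) + 2 * D"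
  proof -
    have "di * D \<le> D" using D0 di by (intro mult_left_le_one_le) auto
    moreover have "0 \<le> di * D" using D0 di by simp
    ultimately have "\<bar>a - di * D\<bar> \<le> D" using a0 aD by linarith
    moreover have "real (card (Hi \<inter> S)) - di * real (card S) = (real (card (Hi \<inter> S')) - di * real (card S')) - (a - di * D)"
      using cH cS' by (simp add: algebra_simps)
    moreover have "(\<epsilon>+\<delta>) * real (card S') \<le> (\<epsilon>+\<delta>) * real (card S) + D"
    proof -
      have "(\<epsilon>+\<delta>) * D \<le> D" using D0 e by (intro mult_left_le_one_le) auto
      then show ?thesis by (simp add: cS' distrib_left)
    qed
    ultimately show ?thesis using regQ' by linarith
  qed
  have "\<delta> * real (card S) \<le> \<delta> / \<epsilon> * real (card S)"
    using e by (intro mult_right_mono) (simp_all add: field_simps)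
  moreover have "(\<epsilon> + 5 * \<delta> / \<epsilon>) * real (card S) = \<epsilon> * real (card S) + 5 * (\<delta> / \<epsilon> * real (card S))"
    by (simp add: distrib_right)
  moreover have "2 * \<delta> / \<epsilon> * real (card S) = 2 * (\<delta> / \<epsilon> * real (card S))" by simp
  ultimately have "(\<epsilon>+\<delta>) * real (card S) + 2 * D \<le> (\<epsilon> + 5 * \<delta> / \<epsilon>) * real (card S)"
    using DS by (simp only: distrib_right)
  with err show ?thesis by (simp add: S_def)
qed




lemma final_arith:
  fixes x \<mu> t c y dd \<gamma> \<epsilon> \<delta> :: real
  assumes h1: "\<bar>x - \<mu>\<bar> < t * c" and mu: "\<mu> = (1-\<gamma>) * y + \<gamma> * dd * c"
    and h2: "\<bar>y - dd * c\<bar> \<le> (\<epsilon> + 5 * \<delta> / \<epsilon>) * c"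
    and t: "t = \<gamma> * \<epsilon> / 4" and g: "0 \<le> \<gamma>" "\<gamma> \<le> 1" and dl: "0 \<le> \<delta>" "\<delta> \<le> \<gamma> * \<epsilon>\<^sup>2 / 10"
    and e: "0 < \<epsilon>" and c: "0 \<le> c"
  shows "\<bar>x - dd * c\<bar> \<le> \<epsilon> * c"
proof -
  have eq: "x - dd * c = (x - \<mu>) + (1 - \<gamma>) * (y - dd * c)" using mu by (simp add: algebra_simps)
  have "\<bar>(1 - \<gamma>) * (y - dd * c)\<bar> = (1 - \<gamma>) * \<bar>y - dd * c\<bar>" using g by (simp add: abs_mult)
  also have "\<dots> \<le> (1 - \<gamma>) * ((\<epsilon> + 5 * \<delta> / \<epsilon>) * c)" using g h2 by (intro mult_left_mono) auto
  also have "\<dots> \<le> (\<epsilon> - \<gamma> * \<epsilon> + 5 * \<delta> / \<epsilon>) * c"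
  proof -
    define a where "a = 5 * \<delta> / \<epsilon>"
    have "0 \<le> a" using dl e by (simp add: a_def)
    then have "(1 - \<gamma>) * a \<le> a" using g by (intro mult_left_le_one_le) auto
    moreover have "(1 - \<gamma>) * (\<epsilon> + a) = \<epsilon> - \<gamma> * \<epsilon> + (1 - \<gamma>) * a" by (simp add: algebra_simps)
    ultimately have "(1 - \<gamma>) * (\<epsilon> + a) \<le> \<epsilon> - \<gamma> * \<epsilon> + a"
      by linarith
    then have "(1 - \<gamma>) * (\<epsilon> + 5 * \<delta> / \<epsilon>) \<le> \<epsilon> - \<gamma> * \<epsilon> + 5 * \<delta> / \<epsilon>"
      by (simp only: a_def)
    then show ?thesis using c by (simp add: mult_right_mono mult.assoc[symmetric])
  qed
  finally have A: "\<bar>(1 - \<gamma>) * (y - dd * c)\<bar> \<le> (\<epsilon> - \<gamma> * \<epsilon> + 5 * \<delta> / \<epsilon>) * c" .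
  have "5 * \<delta> / \<epsilon> \<le> 5 * (\<gamma> * \<epsilon>\<^sup>2 / 10) / \<epsilon>" using dl e by (intro divide_right_mono) auto
  also have "\<dots> = \<gamma> * \<epsilon> / 2" using e by (simp add: power2_eq_square field_simps)
  finally have B: "5 * \<delta> / \<epsilon> \<le> \<gamma> * \<epsilon> / 2" .
  have ge: "0 \<le> \<gamma> * \<epsilon>" using g e by simp
  have "t + (\<epsilon> - \<gamma> * \<epsilon> + 5 * \<delta> / \<epsilon>) \<le> \<epsilon>" using B t ge by linarith
  then have "t * c + (\<epsilon> - \<gamma> * \<epsilon> + 5 * \<delta> / \<epsilon>) * c \<le> \<epsilon> * c" using c
    by (metis distrib_right mult_right_mono)
  then show ?thesis using eq A h1 by linarith
qed

lemma sum_indic: "finite S \<Longrightarrow> (\<Sum>x\<in>S. if P x then 1 else 0 :: real) = real (card {x\<in>S. P x})"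
  by (simp add: sum.If_cases Int_def conj_commute)



lemma core:
  fixes \<epsilon> \<nu> \<delta> :: real and k s m :: nat and d :: "nat \<Rightarrow> real"
    and V :: "nat \<Rightarrow> nat set" and H :: "nat set set" and Hs :: "nat \<Rightarrow> nat set set"
  assumes k: "2 \<le> k" and s: "1 \<le> s" and m: "0 < m"
    and e: "0 < \<epsilon>" "\<epsilon> \<le> 1" and nu: "0 < \<nu>" "\<nu> \<le> 1" and dl: "0 < \<delta>" "\<epsilon> + \<delta> \<le> 1"
    and dnn: "\<forall>i\<in>{1..s}. 0 \<le> d i" and dsum: "(\<Sum>i=1..s. d i) = 1"
    and vc: "vertex_classes m k V" and kjH: "kj_graph k V (k-1) H"
    and Cbig: "\<epsilon> * real m ^ k \<le> real (card (cliques k V (k-1) H))"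
    and kjHs: "\<forall>i\<in>{1..s}. kj_graph k V k (Hs i)"
    and part: "partitions s Hs (cliques k V (k-1) H)"
    and reg: "\<forall>i\<in>{1..s}. regular_wrt k V (\<epsilon> + \<delta>) (d i) (Hs i) H"
    and dsmall: "\<delta> \<le> \<nu> * \<epsilon>\<^sup>2 / (20 * real ((2*k)^k))"
    and mbig1: "2 * real k \<le> \<delta> * \<epsilon> * real m"
    and mbig2: "3 * real s + real ((2*k)^k) < \<nu>\<^sup>2 * \<epsilon>^4 / (32 * (real ((2*k)^k))\<^sup>2) * real m"
  shows "\<exists>G::nat \<Rightarrow> nat set set.
            (\<forall>i\<in>{1..s}. kj_graph k V k (G i)) \<and>
            partitions s G (cliques k V (k-1) H) \<and>
            (\<forall>i\<in>{1..s}. regular_wrt k V \<epsilon> (d i) (G i) H) \<and>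
            (\<forall>i\<in>{1..s}. real (card ((G i - Hs i) \<union> (Hs i - G i))) \<le> \<nu> * real m ^ k)"
proof -
  define U where "U = (\<Union>i\<in>{1..k}. V i)"
  define \<kappa> where "\<kappa> = real ((2*k)^k)"
  define C where "C = cliques k V (k-1) H"
  define N where "N = real (card C)"
  define M where "M = real m ^ k"
  define L where "L = real m ^ (k-1)"
  have finU: "finite U" unfolding U_def using vc_finite[OF vc m] .
  have km: "k \<le> k * m" using m by (metis mult.right_neutral mult_le_mono2 Suc_leI One_nat_def)
  have "k * (m + 1) = k * m + k" "2 * k * m = k * m + k * m" by simp_all
  then have cU: "card U \<le> 2 * k * m" using vc_card[OF vc] km unfolding U_def by linarith
  have "(1::nat) \<le> (2*k)^k" using k by (intro one_le_power) simp
  then have kap1: "1 \<le> \<kappa>" unfolding \<kappa>_def by (metis of_nat_1 of_nat_le_iff)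
  have finC: "finite C" unfolding C_def U_def using card_ksets_le(1)[OF vc_finite[OF vc m] cliques_sub] .
  have "card C \<le> card U ^ k" unfolding C_def U_def using card_ksets_le(2)[OF vc_finite[OF vc m] cliques_sub] .
  also have "\<dots> \<le> (2 * k * m) ^ k" using cU by (rule power_mono) simp
  also have "\<dots> = (2*k)^k * m ^ k" by (simp add: power_mult_distrib)
  finally have NleM: "N \<le> \<kappa> * M" unfolding N_def \<kappa>_def M_def by (metis of_nat_le_iff of_nat_mult of_nat_power)
  have finH: "finite H" using card_ksets_le(1)[OF vc_finite[OF vc m] kj_sub[OF kjH]] .
  have "card H \<le> card U ^ (k-1)" unfolding U_def using card_ksets_le(2)[OF vc_finite[OF vc m] kj_sub[OF kjH]] .
  also have "\<dots> \<le> (2 * k * m) ^ (k-1)" using cU by (rule power_mono) simp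
  also have "\<dots> = (2*k)^(k-1) * m ^ (k-1)" by (simp add: power_mult_distrib)
  also have "\<dots> \<le> (2*k)^k * m ^ (k-1)" using k by (intro mult_right_mono power_increasing) auto
  finally have cHle: "real (card H) \<le> \<kappa> * L" unfolding \<kappa>_def L_def by (metis of_nat_le_iff of_nat_mult of_nat_power)
  have L1: "1 \<le> L" unfolding L_def using m by simp
  have MmL: "M = real m * L" unfolding M_def L_def using k by (simp add: power_eq_if)
  have M0: "0 < M" unfolding M_def using m by simp
  have NeM: "\<epsilon> * M \<le> N" using Cbig unfolding N_def M_def C_def .
  have N0: "0 < N" using NeM e M0 by (smt (verit) mult_pos_pos)
  have n0: "real (card U) \<le> \<delta> * N"
  proof -
    have "real (card U) \<le> 2 * real k * real m" using cU by (metis of_nat_le_iff of_nat_mult of_nat_numeral)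
    also have "\<dots> \<le> \<delta> * \<epsilon> * real m * real m" using mbig1 m by (simp add: mult_right_mono)
    also have "real m ^ 2 \<le> real m ^ k" using k m by (intro power_increasing) auto
    then have "real m * real m \<le> M" unfolding M_def by (simp add: power2_eq_square)
    then have "\<delta> * \<epsilon> * real m * real m \<le> \<delta> * \<epsilon> * M" using dl e by (simp add: mult.assoc mult_left_mono)
    also have "\<dots> \<le> \<delta> * N" using NeM dl by (simp add: mult.assoc mult_left_mono)
    finally show ?thesis .
  qed

  have HsC: "Hs i \<subseteq> C" if "i \<in> {1..s}" for i using part that unfolding partitions_def C_def by blast
  have cover: "\<exists>i. i \<in> {1..s} \<and> K \<in> Hs i" if "K \<in> C" for K using part that unfolding partitions_def C_def by blast
  define h where "h K = (SOME i. i \<in> {1..s} \<and> K \<in> Hs i)" for K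
  have hC: "h K \<in> {1..s} \<and> K \<in> Hs (h K)" if "K \<in> C" for K
    unfolding h_def by (rule someI_ex[OF cover[OF that]])
  have hiff: "K \<in> Hs i \<longleftrightarrow> h K = i" if "K \<in> C" "i \<in> {1..s}" for K i
  proof
    assume "K \<in> Hs i"
    with hC[OF that(1)] have "K \<in> Hs i \<inter> Hs (h K)" by simp
    then show "h K = i" using part hC[OF that(1)] that(2) unfolding partitions_def disjoint_family_on_def by blast
  next
    assume "h K = i" then show "K \<in> Hs i" using hC[OF that(1)] by simp
  qed
  have h0: "h K \<noteq> 0" if "K \<in> C" for K using hC[OF that] by auto
  define \<gamma> where "\<gamma> = \<nu> / (2 * \<kappa>)"
  have g0: "0 < \<gamma>" unfolding \<gamma>_def using nu kap1 by simp
  have g1: "\<gamma> \<le> 1"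
  proof -
    have "\<nu> / (2 * \<kappa>) \<le> \<nu> / 1" using nu kap1 by (intro divide_left_mono) auto
    then show ?thesis using nu unfolding \<gamma>_def by simp
  qed
  have gk: "\<gamma> * \<kappa> = \<nu> / 2" unfolding \<gamma>_def using kap1 by simp
  obtain q where q0: "pmf q 0 = 1 - \<gamma>" and qi: "\<forall>i\<in>{1..s}. pmf q i = \<gamma> * d i" and qs: "set_pmf q \<subseteq> {0..s}"
    using label_pmf_exists[OF s less_imp_le[OF g0] g1 _ dsum] dnn by blast
  define p where "p = Pi_pmf C 0 (\<lambda>_. q)"
  define t where "t = \<gamma> * \<epsilon> / 4"
  define \<beta> where "\<beta> = \<nu>\<^sup>2 * \<epsilon>^4 / (32 * \<kappa>\<^sup>2)"
  have t0: "0 \<le> t" unfolding t_def using g0 e by simp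
  have beta: "2 * t\<^sup>2 * \<epsilon>\<^sup>2 = \<beta>" unfolding t_def \<beta>_def \<gamma>_def using kap1
    by (simp add: power2_eq_square field_simps numeral_eq_Suc)
  have b0: "0 < \<beta>" unfolding \<beta>_def using nu e kap1 by simp
  define Y where "Y i K x = (if (if x = 0 then h K else x) = i then 1 else 0 :: real)" for i K and x :: nat
  define Z where "Z x = (if x \<noteq> 0 then 1 else 0::real)" for x :: nat
  define QQ where "QQ = {Q. Q \<subseteq> H \<and> \<epsilon> * N \<le> real (card (cliques k V (k-1) Q))}"
  define SS where "SS = (\<lambda>Q. cliques k V (k-1) Q) ` QQ"
  have SSsub: "S \<subseteq> C \<and> \<epsilon> * N \<le> real (card S)" if "S \<in> SS" for S
    using that cliques_mono unfolding SS_def QQ_def C_def by blast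
  have QQP: "QQ \<subseteq> Pow H" unfolding QQ_def by auto
  have finSS: "finite SS" unfolding SS_def using finite_subset[OF QQP] finH by simp
  have "card SS \<le> card QQ" unfolding SS_def using finite_subset[OF QQP] finH by (intro card_image_le) simp
  also have "\<dots> \<le> card (Pow H)" using QQP finH by (intro card_mono) auto
  also have "\<dots> = 2 ^ card H" using finH by (simp add: card_Pow)
  finally have cSS: "card SS \<le> 2 ^ card H" .
  define B1 where "B1 = (\<lambda>(i,S). {\<omega>. t * real (card S) \<le> \<bar>(\<Sum>K\<in>S. Y i K (\<omega> K)) - (\<Sum>K\<in>S. measure_pmf.expectation q (Y i K))\<bar>})"
  define B2 where "B2 = {\<omega>. \<nu> * M / 2 \<le> \<bar>(\<Sum>K\<in>C. Z (\<omega> K)) - (\<Sum>K\<in>C. measure_pmf.expectation q Z)\<bar>}"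
  define I where "I = {1..s} \<times> SS"
  have pB1: "measure_pmf.prob p (B1 x) \<le> 2 * exp (- \<beta> * M)" if xI: "x \<in> I" for x
  proof -
    obtain i S where x: "x = (i,S)" "S \<in> SS" using xI unfolding I_def by auto
    have S: "S \<subseteq> C" "\<epsilon> * N \<le> real (card S)" using SSsub[OF x(2)] by auto
    have cS: "0 < real (card S)" using S(2) e N0 by (smt (verit) mult_pos_pos)
    then have Sne: "S \<noteq> {}" by auto
    have "measure_pmf.prob p (B1 x) \<le> 2 * exp (- 2 * (t * real (card S))\<^sup>2 / real (card S))"
      unfolding p_def B1_def x using hoeff_Pi[OF finC S(1) Sne, of "Y i" "t * real (card S)" 0 q] t0
      by (simp add: Y_def)
    also have "- 2 * (t * real (card S))\<^sup>2 / real (card S) = - (2 * t\<^sup>2 * real (card S))"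
      using cS by (simp add: power2_eq_square field_simps)
    also have "\<dots> \<le> - \<beta> * M"
    proof -
      have "\<epsilon> * M \<le> N" by (rule NeM)
      then have "\<epsilon> * (\<epsilon> * M) \<le> \<epsilon> * N" using e by (intro mult_left_mono) auto
      also have "\<dots> \<le> real (card S)" by (rule S(2))
      finally have "2 * t\<^sup>2 * (\<epsilon> * (\<epsilon> * M)) \<le> 2 * t\<^sup>2 * real (card S)" by (intro mult_left_mono) auto
      moreover have "2 * t\<^sup>2 * (\<epsilon> * (\<epsilon> * M)) = \<beta> * M" using beta by (simp add: power2_eq_square algebra_simps)
      ultimately show ?thesis by simp
    qed
    finally show ?thesis by simp
  qed
  have pB2: "measure_pmf.prob p B2 \<le> 2 * exp (- \<beta> * M)"
  proof -
    have Cne: "C \<noteq> {}" using N0 unfolding N_def by auto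
    have "measure_pmf.prob p B2 \<le> 2 * exp (- 2 * (\<nu> * M / 2)\<^sup>2 / real (card C))"
      unfolding p_def B2_def using hoeff_Pi[OF finC subset_refl Cne, of "\<lambda>_. Z" "\<nu> * M / 2" 0 q] nu M0
      by (simp add: Z_def)
    also have "- 2 * (\<nu> * M / 2)\<^sup>2 / real (card C) \<le> - \<beta> * M"
    proof -
      have "2 * \<beta> * N \<le> 2 * \<beta> * (\<kappa> * M)" using NleM b0 by (intro mult_left_mono) auto
      also have "\<dots> = \<nu>\<^sup>2 * M * (\<epsilon>^4 / (16 * \<kappa>))" unfolding \<beta>_def using kap1 by (simp add: power2_eq_square field_simps)
      also have "\<dots> \<le> \<nu>\<^sup>2 * M * 1"
      proof (intro mult_left_mono)
        have "\<epsilon>^4 \<le> 1" using e by (simp add: power_le_one)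
        then show "\<epsilon>^4 / (16 * \<kappa>) \<le> 1" using kap1 by (simp add: field_simps)
      qed (use M0 in simp)
      finally have A: "2 * \<beta> * N \<le> \<nu>\<^sup>2 * M" by simp
      have "\<beta> * M \<le> 2 * (\<nu> * M / 2)\<^sup>2 / N"
      proof -
        have "\<beta> * M * N * 2 \<le> \<nu>\<^sup>2 * M * M" using A M0 by (simp add: mult.commute mult.left_commute)
        then show ?thesis using N0 by (simp add: field_simps power2_eq_square)
      qed
      then show ?thesis by (simp add: N_def)
    qed
    finally show ?thesis by simp
  qed
  define Bad where "Bad = (\<Union>x\<in>I. B1 x) \<union> B2"
  have finI: "finite I" unfolding I_def using finSS by simp
  have "measure_pmf.prob p Bad \<le> measure_pmf.prob p (\<Union>x\<in>I. B1 x) + measure_pmf.prob p B2"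
    unfolding Bad_def by (rule measure_Un_le) auto
  also have "measure_pmf.prob p (\<Union>x\<in>I. B1 x) \<le> (\<Sum>x\<in>I. measure_pmf.prob p (B1 x))"
    by (rule measure_pmf.finite_measure_subadditive_finite[OF finI]) auto
  also have "\<dots> \<le> real (card I) * (2 * exp (- \<beta> * M))"
    using pB1 by (intro sum_bounded_above) auto
  also have "real (card I) \<le> real s * 2 ^ card H"
  proof -
    have "card I = s * card SS" unfolding I_def by (simp add: card_cartesian_product)
    also have "\<dots> \<le> s * 2 ^ card H" using cSS by simp
    finally show ?thesis by (metis of_nat_le_iff of_nat_mult of_nat_power of_nat_numeral)
  qed
  finally have pBad: "measure_pmf.prob p Bad \<le> (real s * 2 ^ card H + 1) * (2 * exp (- \<beta> * M))"
    using pB2 by (simp add: algebra_simps)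
  have small: "(real s * 2 ^ card H + 1) * (2 * exp (- \<beta> * M)) < 1"
  proof -
    define X where "X = real s * 2 ^ card H"
    have a1: "1 \<le> real s" using s by simp
    have a2: "1 \<le> (2::real) ^ card H" by simp
    have X1: "1 \<le> X" unfolding X_def using mult_mono[OF a1 a2] by simp
    have e1: "(2::real) \<le> exp 1" using exp_ge_add_one_self[of 1] by simp
    have p2: "(2::real) ^ n \<le> exp (real n)" for n
    proof -
      have "(2::real) ^ n \<le> exp 1 ^ n" using e1 by (intro power_mono) auto
      also have "\<dots> = exp (real n)" by (simp add: exp_of_nat_mult[symmetric])
      finally show ?thesis .
    qed
    have se: "real s \<le> exp (real s)" using exp_ge_add_one_self[of "real s"] by linarith
    have "(X + 1) * 2 \<le> 4 * X" using X1 by simp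
    also have "\<dots> = 2 ^ 2 * real s * 2 ^ card H" unfolding X_def by simp
    also have "\<dots> \<le> exp (real 2) * exp (real s) * exp (real (card H))"
      using p2[of 2] p2[of "card H"] se by (intro mult_mono) auto
    also have "\<dots> = exp (2 + real s + real (card H))" by (simp add: exp_add)
    finally have A: "(X + 1) * 2 \<le> exp (2 + real s + real (card H))" .
    have "2 + real s + real (card H) \<le> (3 * real s + \<kappa>) * L"
    proof -
      have A: "3 * real s \<le> 3 * real s * L" using L1 s by simp
      have Bq: "(3 * real s + \<kappa>) * L = 3 * real s * L + \<kappa> * L" by (simp add: algebra_simps)
      have s1: "1 \<le> real s" using s by simp
      show ?thesis using A Bq s1 cHle by linarith
    qed
    also have "\<dots> < \<beta> * real m * L"
      using mbig2 L1 unfolding \<beta>_def \<kappa>_def by (intro mult_strict_right_mono) auto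
    also have "\<dots> = \<beta> * M" using MmL by simp
    finally have B: "2 + real s + real (card H) - \<beta> * M < 0" by simp
    have "(X + 1) * (2 * exp (- \<beta> * M)) = ((X + 1) * 2) * exp (- \<beta> * M)" by simp
    also have "\<dots> \<le> exp (2 + real s + real (card H)) * exp (- \<beta> * M)" using A by (intro mult_right_mono) auto
    also have "\<dots> = exp (2 + real s + real (card H) - \<beta> * M)" by (simp add: exp_add[symmetric])
    also have "\<dots> < 1" using B by simp
    finally show ?thesis unfolding X_def .
  qed
  have "measure_pmf.prob p (UNIV - Bad) = 1 - measure_pmf.prob p Bad"
    using measure_pmf.prob_compl[of Bad p] by simp
  then have "measure_pmf.prob p (UNIV - Bad) \<noteq> 0" using pBad small by simp
  then obtain \<omega> where \<omega>p: "\<omega> \<in> set_pmf p" and \<omega>B: "\<omega> \<notin> Bad"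
    using measure_pmf_zero_iff[of p "UNIV - Bad"] by blast
  have \<omega>K: "\<omega> K \<in> {0..s}" if "K \<in> C" for K
    using \<omega>p that qs unfolding p_def set_Pi_pmf[OF finC] PiE_dflt_def by auto

  define lab where "lab K = (if \<omega> K = 0 then h K else \<omega> K)" for K
  define G where "G i = {K\<in>C. lab K = i}" for i
  have labC: "lab K \<in> {1..s}" if "K \<in> C" for K
    using \<omega>K[OF that] hC[OF that] unfolding lab_def by auto
  have GC: "G i \<subseteq> C" for i unfolding G_def by auto
  have P1: "\<forall>i\<in>{1..s}. kj_graph k V k (G i)"
    using GC unfolding kj_graph_def C_def cliques_def by blast
  have P2: "partitions s G (cliques k V (k-1) H)"
    unfolding partitions_def disjoint_family_on_def
  proof (intro conjI ballI impI)
    show "(\<Union>i\<in>{1..s}. G i) = cliques k V (k - 1) H"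
      using labC GC unfolding G_def C_def by blast
  qed (auto simp: G_def)
  have P3: "\<forall>i\<in>{1..s}. regular_wrt k V \<epsilon> (d i) (G i) H"
  proof (intro ballI)
    fix i assume i: "i \<in> {1..s}"
    have di0: "0 \<le> d i" using dnn i by auto
    have di1: "d i \<le> 1"
    proof -
      have "d i \<le> (\<Sum>j=1..s. d j)" using dnn i by (intro member_le_sum) auto
      then show ?thesis using dsum by simp
    qed
    show "regular_wrt k V \<epsilon> (d i) (G i) H"
      unfolding regular_wrt_def
    proof (intro allI impI)
      fix Q assume Q: "Q \<subseteq> H \<and> \<epsilon> * real (card (cliques k V (k - 1) H)) \<le> real (card (cliques k V (k - 1) Q))"
      define S where "S = cliques k V (k-1) Q"
      have SS: "S \<in> SS" unfolding SS_def QQ_def S_def N_def C_def using Q by blast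
      have SC: "S \<subseteq> C" using SSsub[OF SS] by simp
      have finS: "finite S" using finite_subset[OF SC finC] .
      have iS: "(i, S) \<in> I" unfolding I_def using i SS by simp
      then have nb: "\<omega> \<notin> B1 (i, S)" using \<omega>B unfolding Bad_def by blast
      then have h1: "\<bar>(\<Sum>K\<in>S. Y i K (\<omega> K)) - (\<Sum>K\<in>S. measure_pmf.expectation q (Y i K))\<bar> < t * real (card S)"
        unfolding B1_def by simp
      have sY: "(\<Sum>K\<in>S. Y i K (\<omega> K)) = real (card (G i \<inter> S))"
      proof -
        have "(\<Sum>K\<in>S. Y i K (\<omega> K)) = (\<Sum>K\<in>S. if lab K = i then 1 else 0)"
          unfolding Y_def lab_def by simp
        also have "\<dots> = real (card {K\<in>S. lab K = i})" by (rule sum_indic[OF finS])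
        also have "{K\<in>S. lab K = i} = G i \<inter> S" unfolding G_def using SC by auto
        finally show ?thesis .
      qed
      have sE: "(\<Sum>K\<in>S. measure_pmf.expectation q (Y i K)) = (1 - \<gamma>) * real (card (Hs i \<inter> S)) + \<gamma> * d i * real (card S)"
      proof -
        have "(\<Sum>K\<in>S. measure_pmf.expectation q (Y i K)) = (\<Sum>K\<in>S. (1 - \<gamma>) * (if h K = i then 1 else 0) + \<gamma> * d i)"
        proof (rule sum.cong[OF refl])
          fix K assume K: "K \<in> S"
          have "measure_pmf.expectation q (Y i K) = (if h K = i then 1 - \<gamma> else 0) + \<gamma> * d i"
            unfolding Y_def using exp_label[OF q0 _ _ h0, of i "d i" K] qi i K SC by auto
          then show "measure_pmf.expectation q (Y i K) = (1 - \<gamma>) * (if h K = i then 1 else 0) + \<gamma> * d i"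
            by simp
        qed
        also have "\<dots> = (1 - \<gamma>) * (\<Sum>K\<in>S. if h K = i then 1 else 0) + \<gamma> * d i * real (card S)"
          by (simp add: sum.distrib sum_distrib_left)
        also have "(\<Sum>K\<in>S. if h K = i then 1 else 0) = real (card {K\<in>S. h K = i})" by (rule sum_indic[OF finS])
        also have "{K\<in>S. h K = i} = Hs i \<inter> S" using hiff i SC by auto
        finally show ?thesis .
      qed
      have h2: "\<bar>real (card (Hs i \<inter> S)) - d i * real (card S)\<bar> \<le> (\<epsilon> + 5 * \<delta> / \<epsilon>) * real (card S)"
        unfolding S_def
      proof (rule hs_error[OF k vc_finite[OF vc m] kjH _ e dl di0 di1])
        show "regular_wrt k V (\<epsilon> + \<delta>) (d i) (Hs i) H" using reg i by simp
        show "real (card (\<Union>i\<in>{1..k}. V i)) \<le> \<delta> * real (card (cliques k V (k - 1) H))"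
          using n0 unfolding U_def N_def C_def .
      qed (use Q in auto)
      have dg: "\<delta> \<le> \<gamma> * \<epsilon>\<^sup>2 / 10" using dsmall unfolding \<gamma>_def \<kappa>_def by (simp add: field_simps)
      show "\<bar>real (card (G i \<inter> cliques k V (k - 1) Q)) - d i * real (card (cliques k V (k - 1) Q))\<bar>
             \<le> \<epsilon> * real (card (cliques k V (k - 1) Q))"
        using final_arith[OF h1[unfolded sY] sE h2 t_def less_imp_le[OF g0] g1 less_imp_le[OF dl(1)] dg e(1)]
        unfolding S_def by simp
    qed
  qed
  have P4: "\<forall>i\<in>{1..s}. real (card ((G i - Hs i) \<union> (Hs i - G i))) \<le> \<nu> * real m ^ k"
  proof (intro ballI)
    fix i assume i: "i \<in> {1..s}"
    have sub: "(G i - Hs i) \<union> (Hs i - G i) \<subseteq> {K\<in>C. \<omega> K \<noteq> 0}"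
      using GC HsC[OF i] hiff[OF _ i] unfolding G_def lab_def by auto
    have "\<omega> \<notin> B2" using \<omega>B unfolding Bad_def by blast
    then have h: "\<bar>(\<Sum>K\<in>C. Z (\<omega> K)) - (\<Sum>K\<in>C. measure_pmf.expectation q Z)\<bar> < \<nu> * M / 2"
      unfolding B2_def by simp
    have "(\<Sum>K\<in>C. Z (\<omega> K)) = real (card {K\<in>C. \<omega> K \<noteq> 0})" unfolding Z_def by (rule sum_indic[OF finC])
    moreover have "(\<Sum>K\<in>C. measure_pmf.expectation q Z) = N * \<gamma>"
      unfolding Z_def N_def using exp_change[OF q0] by simp
    ultimately have "real (card {K\<in>C. \<omega> K \<noteq> 0}) < N * \<gamma> + \<nu> * M / 2" using h by linarith
    also have "N * \<gamma> \<le> \<kappa> * M * \<gamma>" using NleM g0 by (intro mult_right_mono) auto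
    also have "\<kappa> * M * \<gamma> = \<nu> * M / 2" using gk by (simp add: algebra_simps)
    finally have "real (card {K\<in>C. \<omega> K \<noteq> 0}) < \<nu> * M" by (simp add: mult.commute)
    moreover have "card ((G i - Hs i) \<union> (Hs i - G i)) \<le> card {K\<in>C. \<omega> K \<noteq> 0}"
      using sub finC by (intro card_mono) auto
    ultimately show "real (card ((G i - Hs i) \<union> (Hs i - G i))) \<le> \<nu> * real m ^ k"
      unfolding M_def by linarith
  qed
  show ?thesis using P1 P2 P3 P4 unfolding C_def by blast
qed




lemma triv_err:
  fixes a c dd d0 :: real
  assumes "0 \<le> a" "a \<le> c" "d0 \<le> dd" "dd \<le> 1 - d0" "0 \<le> d0"
  shows "\<bar>a - dd * c\<bar> \<le> (1 - d0) * c"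
proof -
  have c: "0 \<le> c" using assms by simp
  have "dd * c \<le> (1 - d0) * c" using assms c by (intro mult_right_mono) auto
  moreover have "d0 * c \<le> dd * c" using assms c by (intro mult_right_mono) auto
  moreover have "0 \<le> d0 * c" using assms c by simp
  moreover have "(1 - d0) * c = c - d0 * c" by (simp add: algebra_simps)
  ultimately show ?thesis using assms(1,2) by (simp only: abs_le_iff) linarith
qed

lemma trivial_case:
  fixes \<epsilon> d0 \<nu> :: real and k s m :: nat and d :: "nat \<Rightarrow> real"
    and V :: "nat \<Rightarrow> nat set" and H :: "nat set set" and Hs :: "nat \<Rightarrow> nat set set"
  assumes s: "1 \<le> s" and m: "0 < m" and nu: "0 < \<nu>" and ed: "1 - d0 \<le> \<epsilon>" and d0: "0 < d0" "d0 \<le> 1/2"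
    and dge: "\<forall>i\<in>{1..s}. d0 \<le> d i" and dsum: "(\<Sum>i=1..s. d i) = 1"
    and vc: "vertex_classes m k V"
    and kjHs: "\<forall>i\<in>{1..s}. kj_graph k V k (Hs i)"
    and part: "partitions s Hs (cliques k V (k-1) H)"
  shows "\<exists>G::nat \<Rightarrow> nat set set.
            (\<forall>i\<in>{1..s}. kj_graph k V k (G i)) \<and>
            partitions s G (cliques k V (k-1) H) \<and>
            (\<forall>i\<in>{1..s}. regular_wrt k V \<epsilon> (d i) (G i) H) \<and>
            (\<forall>i\<in>{1..s}. real (card ((G i - Hs i) \<union> (Hs i - G i))) \<le> \<nu> * real m ^ k)"
proof (intro exI[of _ Hs] conjI kjHs part ballI)
  fix i assume i: "i \<in> {1..s}"
  show "real (card ((Hs i - Hs i) \<union> (Hs i - Hs i))) \<le> \<nu> * real m ^ k" using nu by simp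
  show "regular_wrt k V \<epsilon> (d i) (Hs i) H"
    unfolding regular_wrt_def
  proof (intro allI impI)
    fix Q assume Q: "Q \<subseteq> H \<and> \<epsilon> * real (card (cliques k V (k - 1) H)) \<le> real (card (cliques k V (k - 1) Q))"
    define S where "S = cliques k V (k-1) Q"
    have finS: "finite S" unfolding S_def using card_ksets_le(1)[OF vc_finite[OF vc m] cliques_sub] .
    have SC: "S \<subseteq> cliques k V (k-1) H" unfolding S_def using Q cliques_mono by blast
    have a: "real (card (Hs i \<inter> S)) \<le> real (card S)" using finS by (simp add: card_mono)
    have "\<bar>real (card (Hs i \<inter> S)) - d i * real (card S)\<bar> \<le> (1 - d0) * real (card S)"
    proof (cases "s = 1")
      case True
      then have i1: "i = 1" using i by simp
      have "d 1 = 1" using dsum True by simp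
      moreover have "Hs 1 = cliques k V (k-1) H" using part True unfolding partitions_def by simp
      ultimately have "\<bar>real (card (Hs i \<inter> S)) - d i * real (card S)\<bar> = 0"
        using SC i1 by (simp add: Int_absorb1)
      then show ?thesis using d0 ed by simp
    next
      case False
      define j where "j = (if i = 1 then 2 else (1::nat))"
      have j: "j \<in> {1..s}" "j \<noteq> i" using i s False unfolding j_def by auto
      have "d i + d j = (\<Sum>l\<in>{i,j}. d l)" using j by simp
      also have "\<dots> \<le> (\<Sum>l=1..s. d l)"
      proof (rule sum_mono2)
        show "{i, j} \<subseteq> {1..s}" using i j by auto
        show "0 \<le> d b" if "b \<in> {1..s} - {i, j}" for b
        proof -
          have "d0 \<le> d b" using dge that by blast
          then show "0 \<le> d b" using d0(1) by linarith
        qed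
      qed simp
      finally have "d i \<le> 1 - d j" using dsum by simp
      then have "d i \<le> 1 - d0" using dge j by force
      then show ?thesis using triv_err[OF _ a] dge i d0 by simp
    qed
    also have "\<dots> \<le> \<epsilon> * real (card S)" using ed by (intro mult_right_mono) auto
    finally show "\<bar>real (card (Hs i \<inter> cliques k V (k - 1) Q)) - d i * real (card (cliques k V (k - 1) Q))\<bar>
         \<le> \<epsilon> * real (card (cliques k V (k - 1) Q))" unfolding S_def .
  qed
qed



lemma params:
  fixes \<epsilon> d0 \<nu> \<delta> :: real and k s m :: nat
  assumes k: "2 \<le> k" and s: "1 \<le> s" and e0: "0 < \<epsilon>" and e1: "\<epsilon> < 1" and d0: "0 < d0" "d0 \<le> 1/2"
    and nu: "0 < \<nu>" "\<nu> \<le> 1" and dl: "0 < \<delta>" and m: "0 < m"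
    and fd: "\<delta> \<le> fdel [\<nu>, \<epsilon>, 1 / real k, 1 / real s, d0]"
    and fm: "1 / real m \<le> fmm [\<delta>, \<nu>, \<epsilon>, 1 / real k, 1 / real s, d0]"
  shows "\<delta> \<le> d0" "\<delta> \<le> \<nu> * \<epsilon>\<^sup>2 / (20 * real ((2*k)^k))"
    "2 * real k \<le> \<delta> * \<epsilon> * real m"
    "3 * real s + real ((2*k)^k) < \<nu>\<^sup>2 * \<epsilon>^4 / (32 * (real ((2*k)^k))\<^sup>2) * real m"
proof -
  define E where "E = exp (2 * real k ^ 2)"
  define \<kappa> where "\<kappa> = real ((2*k)^k)"
  have kE: "\<kappa> \<le> E" unfolding \<kappa>_def E_def by (rule kappa_bound)
  have "(1::nat) \<le> (2*k)^k" using k by (intro one_le_power) simp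
  then have kap1: "1 \<le> \<kappa>" unfolding \<kappa>_def by (metis of_nat_1 of_nat_le_iff)
  have E1: "1 \<le> E" using kap1 kE by simp
  have E0: "0 < E" unfolding E_def by simp
  have k0: "0 < real k" using k by simp
  have x2: "- 2 / (1 / real k)\<^sup>2 = - (2 * real k ^ 2)" using k0 by (simp add: power_divide)
  have x6: "- 6 / (1 / real k)\<^sup>2 = - (2 * real k ^ 2) * 3" using k0 by (simp add: power_divide)
  have fdv: "fdel [\<nu>, \<epsilon>, 1 / real k, 1 / real s, d0] = d0 * (\<nu> * \<epsilon>\<^sup>2 / (20 * E))"
    unfolding fdel_def E_def using x2 by (simp add: exp_minus field_simps)
  have E3: "exp (- (2 * real k ^ 2) * 3) = 1 / E ^ 3"
    unfolding E_def by (simp add: exp_minus exp_of_nat_mult[symmetric] mult.commute inverse_eq_divide)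
  have fmv: "fmm [\<delta>, \<nu>, \<epsilon>, 1 / real k, 1 / real s, d0] = \<delta> * \<nu>\<^sup>2 * \<epsilon>^4 / (200 * real k * real s * E^3)"
    unfolding fmm_def using x6 E3 by (simp add: field_simps)
  have q1: "\<nu> * \<epsilon>\<^sup>2 / (20 * E) \<le> 1"
  proof -
    have "\<nu> * \<epsilon>\<^sup>2 \<le> 1 * 1" using nu e0 e1 by (intro mult_mono) (auto simp: power_le_one)
    then show ?thesis using E1 by (simp add: field_simps)
  qed
  show dd0: "\<delta> \<le> d0" using fd fdv q1 d0 by (metis mult_left_le order_trans less_imp_le)
  show "\<delta> \<le> \<nu> * \<epsilon>\<^sup>2 / (20 * real ((2*k)^k))"
  proof -
    have "d0 * (\<nu> * \<epsilon>\<^sup>2 / (20 * E)) \<le> 1 * (\<nu> * \<epsilon>\<^sup>2 / (20 * E))"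
      using d0 nu e0 E0 by (intro mult_right_mono) auto
    also have "\<dots> \<le> \<nu> * \<epsilon>\<^sup>2 / (20 * \<kappa>)"
      using kE kap1 nu e0 by (simp add: frac_le)
    finally show ?thesis using fd fdv unfolding \<kappa>_def by simp
  qed
  have s1: "1 \<le> real s" using s by simp
  have mpos: "0 < real m" using m by simp
  have key: "200 * real k * real s * E^3 \<le> real m * (\<delta> * \<nu>\<^sup>2 * \<epsilon>^4)"
  proof -
    have D: "0 < 200 * real k * real s * E^3" using k0 s1 E0 by simp
    from fm fmv have "1 / real m \<le> \<delta> * \<nu>\<^sup>2 * \<epsilon>^4 / (200 * real k * real s * E^3)" by simp
    then show ?thesis using D mpos by (simp add: field_simps)
  qed
  have ksE: "real k * real s * 1 \<le> real k * real s * E^3"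
    using k0 s1 E1 by (intro mult_left_mono) (auto simp: one_le_power)
  have ne1: "\<nu>\<^sup>2 * \<epsilon>^3 \<le> 1" using nu e0 e1 by (intro mult_le_one) (auto simp: power_le_one)
  show "2 * real k \<le> \<delta> * \<epsilon> * real m"
  proof -
    have E31: "1 \<le> E^3" using E1 by (simp add: one_le_power)
    have sE: "1 \<le> real s * E^3" using mult_mono[OF s1 E31] by simp
    have X: "real k * 1 \<le> real k * (real s * E^3)" using sE k0 by (intro mult_left_mono) auto
    have "200 * real k * real s * E^3 = 200 * (real k * (real s * E^3))" by (simp add: mult.assoc)
    then have "2 * real k \<le> 200 * real k * real s * E^3" using X k0 by linarith
    also have "\<dots> \<le> real m * (\<delta> * \<nu>\<^sup>2 * \<epsilon>^4)" by (rule key)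
    also have "\<dots> = (\<delta> * \<epsilon> * real m) * (\<nu>\<^sup>2 * \<epsilon>^3)" by (simp add: power_Suc algebra_simps numeral_eq_Suc)
    also have "\<dots> \<le> (\<delta> * \<epsilon> * real m) * 1" using ne1 dl e0 mpos by (intro mult_left_mono) auto
    finally show ?thesis by simp
  qed
  show "3 * real s + real ((2*k)^k) < \<nu>\<^sup>2 * \<epsilon>^4 / (32 * (real ((2*k)^k))\<^sup>2) * real m"
  proof -
    have dle1: "\<delta> \<le> 1" using dd0 d0 by simp
    have "200 * real k * real s * E^3 \<le> real m * (\<delta> * \<nu>\<^sup>2 * \<epsilon>^4)" by (rule key)
    also have "\<dots> \<le> real m * (1 * \<nu>\<^sup>2 * \<epsilon>^4)" using dle1 mpos by (intro mult_left_mono mult_right_mono) auto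
    finally have A: "200 * real k * real s * E^3 \<le> \<nu>\<^sup>2 * \<epsilon>^4 * real m" by (simp add: mult.commute)
    have "200 * real s * E * \<kappa>\<^sup>2 \<le> 200 * real k * real s * E^3"
    proof -
      have "E * \<kappa>\<^sup>2 \<le> E * E\<^sup>2" using kE kap1 E0 by (intro mult_left_mono power_mono) auto
      also have "\<dots> = E^3" by (simp add: power2_eq_square power3_eq_cube)
      also have "E^3 = 1 * E^3" by simp
      also have "\<dots> \<le> real k * E^3" using k E0 by (intro mult_right_mono) auto
      finally have "E * \<kappa>\<^sup>2 \<le> real k * E^3" .
      then have "200 * real s * (E * \<kappa>\<^sup>2) \<le> 200 * real s * (real k * E^3)" using s1 by (intro mult_left_mono) auto
      then show ?thesis by (simp add: algebra_simps)
    qed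
    also note A
    finally have B: "200 * real s * E * \<kappa>\<^sup>2 \<le> \<nu>\<^sup>2 * \<epsilon>^4 * real m" .
    have C1: "real s * 1 \<le> real s * E" using s1 E1 by (intro mult_left_mono) auto
    have C2: "1 * E \<le> real s * E" using s1 E1 by (intro mult_right_mono) auto
    have C: "3 * real s + \<kappa> \<le> 4 * real s * E" using C1 C2 kE by simp
    have "(3 * real s + \<kappa>) * (32 * \<kappa>\<^sup>2) < 200 * real s * E * \<kappa>\<^sup>2"
    proof -
      have "(3 * real s + \<kappa>) * (32 * \<kappa>\<^sup>2) \<le> 4 * real s * E * (32 * \<kappa>\<^sup>2)" using C kap1 by (intro mult_right_mono) auto
      also have "\<dots> < 200 * real s * E * \<kappa>\<^sup>2"
      proof -
        have P: "0 < real s * E * \<kappa>\<^sup>2" using s1 E0 kap1 by simp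
        have "4 * real s * E * (32 * \<kappa>\<^sup>2) = 128 * (real s * E * \<kappa>\<^sup>2)" by (simp add: algebra_simps)
        moreover have "200 * real s * E * \<kappa>\<^sup>2 = 200 * (real s * E * \<kappa>\<^sup>2)" by (simp add: algebra_simps)
        ultimately show ?thesis using P by linarith
      qed
      finally show ?thesis .
    qed
    from this B have "(3 * real s + \<kappa>) * (32 * \<kappa>\<^sup>2) < \<nu>\<^sup>2 * \<epsilon>^4 * real m" by (rule less_le_trans)
    then have "3 * real s + \<kappa> < \<nu>\<^sup>2 * \<epsilon>^4 * real m / (32 * \<kappa>\<^sup>2)"
      using kap1 by (subst pos_less_divide_eq) auto
    then show ?thesis unfolding \<kappa>_def[symmetric] by simp
  qed
qed


lemma main_impl:
  fixes \<epsilon> dz \<nu> \<delta> :: real and k s m :: nat and d :: "nat \<Rightarrow> real"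
    and V :: "nat \<Rightarrow> nat set" and H :: "nat set set" and Hs :: "nat \<Rightarrow> nat set set"
  assumes k: "2 \<le> k" and s: "1 \<le> s" and e0: "0 < \<epsilon>" and dz: "0 < dz" "dz \<le> 1/2"
    and nu0: "0 < \<nu>" and dl: "0 < \<delta>" and m: "0 < m"
    and nu1: "\<nu> \<le> 1"
    and fd: "\<delta> \<le> fdel [\<nu>, \<epsilon>, 1 / real k, 1 / real s, dz]"
    and fm: "1 / real m \<le> fmm [\<delta>, \<nu>, \<epsilon>, 1 / real k, 1 / real s, dz]"
    and dge: "\<forall>i\<in>{1..s}. dz \<le> d i" and dsum: "(\<Sum>i=1..s. d i) = 1"
    and vc: "vertex_classes m k V" and kjH: "kj_graph k V (k-1) H"
    and Cbig: "real (card (cliques k V (k-1) H)) \<ge> \<epsilon> * real m ^ k"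
    and kjHs: "\<forall>i\<in>{1..s}. kj_graph k V k (Hs i)"
    and part: "partitions s Hs (cliques k V (k-1) H)"
    and reg: "\<forall>i\<in>{1..s}. regular_wrt k V (\<epsilon> + \<delta>) (d i) (Hs i) H"
  shows "\<exists>G::nat \<Rightarrow> nat set set.
            (\<forall>i\<in>{1..s}. kj_graph k V k (G i)) \<and>
            partitions s G (cliques k V (k-1) H) \<and>
            (\<forall>i\<in>{1..s}. regular_wrt k V \<epsilon> (d i) (G i) H) \<and>
            (\<forall>i\<in>{1..s}. real (card ((G i - Hs i) \<union> (Hs i - G i))) \<le> \<nu> * real m ^ k)"
proof (cases "1 - dz \<le> \<epsilon>")
  case True
  show ?thesis by (rule trivial_case[OF s m nu0 True dz dge dsum vc kjHs part])
next
  case False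
  then have e1: "\<epsilon> < 1" using dz by simp
  note P = params[OF k s e0 e1 dz nu0 nu1 dl m fd fm]
  have edl: "\<epsilon> + \<delta> \<le> 1" using P(1) False by simp
  have dnn: "\<forall>i\<in>{1..s}. 0 \<le> d i"
  proof
    fix i assume "i \<in> {1..s}"
    then have "dz \<le> d i" using dge by blast
    then show "0 \<le> d i" using dz(1) by linarith
  qed
  show ?thesis
    by (rule core[OF k s m e0 less_imp_le[OF e1] nu0 nu1 dl edl dnn dsum vc kjH Cbig kjHs part reg P(2) P(3) P(4)])
qed

theorem lemma4p11:
  shows "\<exists>f\<nu> f\<delta> fm. hier_fun 4 f\<nu> \<and> hier_fun 5 f\<delta> \<and> hier_fun 6 fm \<and>
    (\<forall>(\<epsilon>::real) (k::nat) (s::nat) (d0::real) (\<nu>::real) (\<delta>::real) (m::nat)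
       (d::nat \<Rightarrow> real) (V::nat \<Rightarrow> nat set) (H::nat set set) (Hs::nat \<Rightarrow> nat set set).
       2 \<le> k \<and> 1 \<le> s \<and> 0 < \<epsilon> \<and> 0 < d0 \<and> d0 \<le> 1/2 \<and> 0 < \<nu> \<and> 0 < \<delta> \<and> 0 < m \<and>
       \<nu> \<le> f\<nu> [\<epsilon>, 1 / real k, 1 / real s, d0] \<and>
       \<delta> \<le> f\<delta> [\<nu>, \<epsilon>, 1 / real k, 1 / real s, d0] \<and>
       1 / real m \<le> fm [\<delta>, \<nu>, \<epsilon>, 1 / real k, 1 / real s, d0] \<and>
       (\<forall>i\<in>{1..s}. d0 \<le> d i) \<and> (\<Sum>i=1..s. d i) = 1 \<and>
       vertex_classes m k V \<and>
       kj_graph k V (k-1) H \<and>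
       real (card (cliques k V (k-1) H)) \<ge> \<epsilon> * real m ^ k \<and>
       (\<forall>i\<in>{1..s}. kj_graph k V k (Hs i)) \<and>
       partitions s Hs (cliques k V (k-1) H) \<and>
       (\<forall>i\<in>{1..s}. regular_wrt k V (\<epsilon> + \<delta>) (d i) (Hs i) H)
     \<longrightarrow> (\<exists>G::nat \<Rightarrow> nat set set.
            (\<forall>i\<in>{1..s}. kj_graph k V k (G i)) \<and>
            partitions s G (cliques k V (k-1) H) \<and>
            (\<forall>i\<in>{1..s}. regular_wrt k V \<epsilon> (d i) (G i) H) \<and>
            (\<forall>i\<in>{1..s}. real (card ((G i - Hs i) \<union> (Hs i - G i))) \<le> \<nu> * real m ^ k)))"

  apply (rule exI[of _ "\<lambda>_. 1"], rule exI[of _ fdel], rule exI[of _ fmm])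
  apply (intro conjI hier_const hier_fdel hier_fmm allI impI)
  subgoal for \<epsilon> k s d0 \<nu> \<delta> m d V H Hs
    apply (elim conjE)
    apply (rule main_impl[where \<epsilon>=\<epsilon> and dz=d0 and \<nu>=\<nu> and \<delta>=\<delta> and k=k and s=s and m=m and d=d and V=V and H=H and Hs=Hs])
                      apply assumption+
    done
  done


end
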